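(* Let $(X,\ll)$ be a past-regular and future-regular chronological set, and let $\eta=\{x_n\}_n$ be a future-directed chain in $X$. Then for every $x\in X$: (a) $x\in \hat L(\eta)$ if and only if $I^-(x)=I^-(\eta)$; (b) $x\in \check L(\eta)$ if and only if $I^+(x)\subset \uparrow\eta$ and $I^+(x)$ is maximal (with respect to inclusion) among the IFs contained in $\uparrow\eta$. Dually, if $\eta$ is a past-directed chain, then $x\in \check L(\eta)$ iff $I^+(x)=I^+(\eta)$, and $x\in\hat L(\eta)$ iff $I^-(x)\subset\downarrow\eta$ and $I^-(x)$ is maximal among the IPs contained in $\downarrow\eta$.
   Context: A chronological set $(X,\ll)$ is a set $X$ with a transitive, anti-reflexive binary relation $\ll$ such that (i) every $x$ satisfies $x\ll y$ or $y\ll x$ for some $y\in X$, and (ii) there is a countable $\mathcal S\subset X$ with: for all $x\ll y$ there is $s\in\mathcal S$ with $x\ll s\ll y$. For $S\subset X$, $I^-(S)=\{y: y\ll x \text{ for some } x\in S\}$, $I^+(S)=\{y: x\ll y \text{ for some } x\in S\}$. A past set is $P\subset X$ with $P=I^-(P)$; an IP (indecomposable past set) is a nonempty past set that cannot be written as the union of two past sets both different from it; future sets and IFs are defined dually. $X$ is past-regular (resp. future-regular) if $I^-(x)$ is an IP (resp. $I^+(x)$ is an IF) for every $x\in X$. A future-directed (resp. past-directed) chain is a sequence $\{x_n\}_n$ with $x_n\ll x_{n+1}$ (resp. $x_{n+1}\ll x_n$) for all $n$; $I^\pm(\eta)$ means $I^\pm$ of the set of its terms. The common future of $S\subset X$ is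 $\uparrow S=I^+(\{y\in X: x\ll y\ \forall x\in S\})$ and the common past is $\downarrow S=I^-(\{y\in X: y\ll x\ \forall x\in S\})$. For a sequence of subsets $A_n$, $LI(\{A_n\})$ is the set of points belonging to $A_n$ for all sufficiently large $n$ and $LS(\{A_n\})$ the set of points belonging to infinitely many $A_n$. For a sequence $\sigma=\{x_n\}_n$ in $X$: $x\in\hat L(\sigma)$ iff $I^-(x)\subset LI(\{I^-(x_n)\})$ and $I^-(x)$ is a maximal IP (w.r.t. inclusion) among IPs contained in $LS(\{I^-(x_n)\})$; dually $x\in\check L(\sigma)$ iff $I^+(x)\subset LI(\{I^+(x_n)\})$ and $I^+(x)$ is a maximal IF among IFs contained in $LS(\{I^+(x_n)\})$. *)

theory Defs
  imports "HOL-Library.Countable_Set"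
begin

text \<open>A chronological set: the carrier is the whole type 'a, the relation is rel.\<close>

definition chronological :: "('a \<Rightarrow> 'a \<Rightarrow> bool) \<Rightarrow> bool" where
  "chronological rel \<longleftrightarrow>
     (\<forall>x y z. rel x y \<longrightarrow> rel y z \<longrightarrow> rel x z) \<and>
     (\<forall>x. \<not> rel x x) \<and>
     (\<forall>x. \<exists>y. rel x y \<or> rel y x) \<and>
     (\<exists>S. countable S \<and> (\<forall>x y. rel x y \<longrightarrow> (\<exists>s\<in>S. rel x s \<and> rel s y)))"

definition chr_past :: "('a \<Rightarrow> 'a \<Rightarrow> bool) \<Rightarrow> 'a set \<Rightarrow> 'a set" where
  "chr_past rel S = {y. \<exists>x\<in>S. rel y x}"

definition chr_fut :: "('a \<Rightarrow> 'a \<Rightarrow> bool) \<Rightarrow> 'a set \<Rightarrow> 'a set" where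
  "chr_fut rel S = {y. \<exists>x\<in>S. rel x y}"

definition past_set :: "('a \<Rightarrow> 'a \<Rightarrow> bool) \<Rightarrow> 'a set \<Rightarrow> bool" where
  "past_set rel P \<longleftrightarrow> P = chr_past rel P"

definition future_set :: "('a \<Rightarrow> 'a \<Rightarrow> bool) \<Rightarrow> 'a set \<Rightarrow> bool" where
  "future_set rel F \<longleftrightarrow> F = chr_fut rel F"

definition is_IP :: "('a \<Rightarrow> 'a \<Rightarrow> bool) \<Rightarrow> 'a set \<Rightarrow> bool" where
  "is_IP rel P \<longleftrightarrow> P \<noteq> {} \<and> past_set rel P \<and>
     \<not> (\<exists>A B. past_set rel A \<and> past_set rel B \<and> A \<noteq> P \<and> B \<noteq> P \<and> P = A \<union> B)"

definition is_IF :: "('a \<Rightarrow> 'a \<Rightarrow> bool) \<Rightarrow> 'a set \<Rightarrow> bool" where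
  "is_IF rel F \<longleftrightarrow> F \<noteq> {} \<and> future_set rel F \<and>
     \<not> (\<exists>A B. future_set rel A \<and> future_set rel B \<and> A \<noteq> F \<and> B \<noteq> F \<and> F = A \<union> B)"

definition past_regular :: "('a \<Rightarrow> 'a \<Rightarrow> bool) \<Rightarrow> bool" where
  "past_regular rel \<longleftrightarrow> (\<forall>x. is_IP rel (chr_past rel {x}))"

definition future_regular :: "('a \<Rightarrow> 'a \<Rightarrow> bool) \<Rightarrow> bool" where
  "future_regular rel \<longleftrightarrow> (\<forall>x. is_IF rel (chr_fut rel {x}))"

definition fut_chain :: "('a \<Rightarrow> 'a \<Rightarrow> bool) \<Rightarrow> (nat \<Rightarrow> 'a) \<Rightarrow> bool" where
  "fut_chain rel x \<longleftrightarrow> (\<forall>n. rel (x n) (x (Suc n)))"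

definition past_chain :: "('a \<Rightarrow> 'a \<Rightarrow> bool) \<Rightarrow> (nat \<Rightarrow> 'a) \<Rightarrow> bool" where
  "past_chain rel x \<longleftrightarrow> (\<forall>n. rel (x (Suc n)) (x n))"

definition common_future :: "('a \<Rightarrow> 'a \<Rightarrow> bool) \<Rightarrow> 'a set \<Rightarrow> 'a set" where
  "common_future rel S = chr_fut rel {y. \<forall>x\<in>S. rel x y}"

definition common_past :: "('a \<Rightarrow> 'a \<Rightarrow> bool) \<Rightarrow> 'a set \<Rightarrow> 'a set" where
  "common_past rel S = chr_past rel {y. \<forall>x\<in>S. rel y x}"

definition LI :: "(nat \<Rightarrow> 'a set) \<Rightarrow> 'a set" where
  "LI A = {p. \<exists>N. \<forall>n\<ge>N. p \<in> A n}"

definition LS :: "(nat \<Rightarrow> 'a set) \<Rightarrow> 'a set" where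
  "LS A = {p. \<forall>N. \<exists>n\<ge>N. p \<in> A n}"

definition hatL :: "('a \<Rightarrow> 'a \<Rightarrow> bool) \<Rightarrow> (nat \<Rightarrow> 'a) \<Rightarrow> 'a set" where
  "hatL rel \<sigma> = {x.
     chr_past rel {x} \<subseteq> LI (\<lambda>n. chr_past rel {\<sigma> n}) \<and>
     is_IP rel (chr_past rel {x}) \<and>
     chr_past rel {x} \<subseteq> LS (\<lambda>n. chr_past rel {\<sigma> n}) \<and>
     (\<forall>P. is_IP rel P \<and> P \<subseteq> LS (\<lambda>n. chr_past rel {\<sigma> n}) \<and> chr_past rel {x} \<subseteq> P
          \<longrightarrow> P = chr_past rel {x})}"

definition checkL :: "('a \<Rightarrow> 'a \<Rightarrow> bool) \<Rightarrow> (nat \<Rightarrow> 'a) \<Rightarrow> 'a set" where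
  "checkL rel \<sigma> = {x.
     chr_fut rel {x} \<subseteq> LI (\<lambda>n. chr_fut rel {\<sigma> n}) \<and>
     is_IF rel (chr_fut rel {x}) \<and>
     chr_fut rel {x} \<subseteq> LS (\<lambda>n. chr_fut rel {\<sigma> n}) \<and>
     (\<forall>F. is_IF rel F \<and> F \<subseteq> LS (\<lambda>n. chr_fut rel {\<sigma> n}) \<and> chr_fut rel {x} \<subseteq> F
          \<longrightarrow> F = chr_fut rel {x})}"

end

theory Submission
  imports Defs
begin

lemma chain_lt:
  assumes tr: "\<forall>x y z. rel x y \<longrightarrow> rel y z \<longrightarrow> rel x z" and c: "fut_chain rel \<eta>"
  shows "m < n \<Longrightarrow> rel (\<eta> m) (\<eta> n)"
proof (induction n)
  case 0 then show ?case by simp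
next
  case (Suc n)
  have s: "rel (\<eta> n) (\<eta> (Suc n))" using c by (simp add: fut_chain_def)
  show ?case
  proof (cases "m = n")
    case True then show ?thesis using s by simp
  next
    case False then have "m < n" using Suc.prems by simp
    then show ?thesis using Suc.IH s tr by blast
  qed
qed

lemma fut_case:
  assumes tr: "\<forall>x y z. rel x y \<longrightarrow> rel y z \<longrightarrow> rel x z"
    and PR: "\<forall>x. is_IP rel (chr_past rel {x})"
    and FR: "\<forall>x. is_IF rel (chr_fut rel {x})"
    and c: "fut_chain rel \<eta>"
  shows "(x \<in> hatL rel \<eta> \<longleftrightarrow> chr_past rel {x} = chr_past rel (range \<eta>)) \<and>
            (x \<in> checkL rel \<eta> \<longleftrightarrow>
               chr_fut rel {x} \<subseteq> common_future rel (range \<eta>) \<and>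
               is_IF rel (chr_fut rel {x}) \<and>
               (\<forall>F. is_IF rel F \<and> F \<subseteq> common_future rel (range \<eta>) \<and> chr_fut rel {x} \<subseteq> F
                    \<longrightarrow> F = chr_fut rel {x}))"
proof -
  have lt: "\<And>m n. m < n \<Longrightarrow> rel (\<eta> m) (\<eta> n)" using chain_lt[OF tr c] by blast
  have trr: "\<And>x y z. rel x y \<Longrightarrow> rel y z \<Longrightarrow> rel x z" using tr by blast
  have le: "\<And>m n p. m \<le> n \<Longrightarrow> rel p (\<eta> m) \<Longrightarrow> rel p (\<eta> n)"
  proof -
    fix m n p assume "m \<le> n" "rel p (\<eta> m)"
    then show "rel p (\<eta> n)"
    proof (cases "m = n")
      case False then have "m < n" using \<open>m \<le> n\<close> by simp
      then show ?thesis using trr[OF \<open>rel p (\<eta> m)\<close> lt] by simp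
    qed simp
  qed
  have le2: "\<And>m n p. m \<le> n \<Longrightarrow> rel (\<eta> n) p \<Longrightarrow> rel (\<eta> m) p"
  proof -
    fix m n p assume "m \<le> n" "rel (\<eta> n) p"
    then show "rel (\<eta> m) p"
    proof (cases "m = n")
      case False then have "m < n" using \<open>m \<le> n\<close> by simp
      then show ?thesis using trr[OF lt \<open>rel (\<eta> n) p\<close>] by simp
    qed simp
  qed
  define Q where "Q = chr_past rel (range \<eta>)"
  have LIp: "LI (\<lambda>n. chr_past rel {\<eta> n}) = Q"
  proof
    show "LI (\<lambda>n. chr_past rel {\<eta> n}) \<subseteq> Q"
      unfolding LI_def Q_def chr_past_def by auto
    show "Q \<subseteq> LI (\<lambda>n. chr_past rel {\<eta> n})"
    proof
      fix p assume "p \<in> Q"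
      then obtain m where "rel p (\<eta> m)" unfolding Q_def chr_past_def by auto
      then have "\<forall>n\<ge>m. p \<in> chr_past rel {\<eta> n}" using le unfolding chr_past_def by auto
      then show "p \<in> LI (\<lambda>n. chr_past rel {\<eta> n})" unfolding LI_def by auto
    qed
  qed
  have LSp: "LS (\<lambda>n. chr_past rel {\<eta> n}) = Q"
  proof
    show "LS (\<lambda>n. chr_past rel {\<eta> n}) \<subseteq> Q"
      unfolding LS_def Q_def chr_past_def by auto
    show "Q \<subseteq> LS (\<lambda>n. chr_past rel {\<eta> n})"
    proof
      fix p assume "p \<in> Q"
      then obtain m where "rel p (\<eta> m)" unfolding Q_def chr_past_def by auto
      then have "\<forall>n\<ge>m. p \<in> chr_past rel {\<eta> n}" using le unfolding chr_past_def by auto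
      then show "p \<in> LS (\<lambda>n. chr_past rel {\<eta> n})" unfolding LS_def
      proof (intro CollectI allI)
        fix N show "\<exists>n\<ge>N. p \<in> chr_past rel {\<eta> n}"
          using \<open>\<forall>n\<ge>m. p \<in> chr_past rel {\<eta> n}\<close> by (intro exI[of _ "max m N"]) simp
      qed
    qed
  qed
  have etaQ: "\<And>n. \<eta> n \<in> Q" unfolding Q_def chr_past_def using lt[of _ "Suc _"] by blast
  have Qpast: "past_set rel Q"
    unfolding past_set_def Q_def chr_past_def
  proof (intro set_eqI iffI)
    fix y assume "y \<in> {y. \<exists>x\<in>range \<eta>. rel y x}"
    then obtain n where "rel y (\<eta> n)" by auto
    then show "y \<in> {y. \<exists>x\<in>{y. \<exists>x\<in>range \<eta>. rel y x}. rel y x}"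
      using lt[of n "Suc n"] by blast
  next
    fix y assume "y \<in> {y. \<exists>x\<in>{y. \<exists>x\<in>range \<eta>. rel y x}. rel y x}"
    then show "y \<in> {y. \<exists>x\<in>range \<eta>. rel y x}" using trr by blast
  qed
  have QIP: "is_IP rel Q"
    unfolding is_IP_def
  proof (intro conjI notI)
    show "Q = {} \<Longrightarrow> False" using etaQ by auto
    show "past_set rel Q" by (rule Qpast)
  next
    assume "\<exists>A B. past_set rel A \<and> past_set rel B \<and> A \<noteq> Q \<and> B \<noteq> Q \<and> Q = A \<union> B"
    then obtain A B where A: "past_set rel A" and B: "past_set rel B" and nA: "A \<noteq> Q"
      and nB: "B \<noteq> Q" and U: "Q = A \<union> B" by blast
    have sub: "\<And>C n. past_set rel C \<Longrightarrow> \<eta> n \<in> C \<Longrightarrow> chr_past rel {\<eta> n} \<subseteq> C"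
      unfolding past_set_def chr_past_def by blast
    have full: "\<And>C. past_set rel C \<Longrightarrow> C \<subseteq> Q \<Longrightarrow> (\<forall>N. \<exists>n\<ge>N. \<eta> n \<in> C) \<Longrightarrow> C = Q"
    proof
      fix C assume pC: "past_set rel C" and "C \<subseteq> Q" and inf: "\<forall>N. \<exists>n\<ge>N. \<eta> n \<in> C"
      then show "C \<subseteq> Q" by simp
      show "Q \<subseteq> C"
      proof
        fix p assume "p \<in> Q"
        then obtain m where pm: "rel p (\<eta> m)" unfolding Q_def chr_past_def by auto
        obtain n where "n \<ge> m" "\<eta> n \<in> C" using inf by blast
        then have "rel p (\<eta> n)" using le pm by blast
        then show "p \<in> C" using sub[OF pC \<open>\<eta> n \<in> C\<close>] unfolding chr_past_def by blast
      qed
    qed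
    have "(\<forall>N. \<exists>n\<ge>N. \<eta> n \<in> A) \<or> (\<forall>N. \<exists>n\<ge>N. \<eta> n \<in> B)"
    proof (rule ccontr)
      assume "\<not> ?thesis"
      then obtain N1 N2 where "\<forall>n\<ge>N1. \<eta> n \<notin> A" "\<forall>n\<ge>N2. \<eta> n \<notin> B" by blast
      then have "\<eta> (max N1 N2) \<notin> A \<union> B" by auto
      then show False using etaQ U by auto
    qed
    then show False using full[OF A] full[OF B] U nA nB by blast
  qed
  define M where "M = {p. \<forall>n. rel (\<eta> n) p}"
  have LIf: "LI (\<lambda>n. chr_fut rel {\<eta> n}) = M"
  proof
    show "LI (\<lambda>n. chr_fut rel {\<eta> n}) \<subseteq> M"
      unfolding LI_def M_def chr_fut_def
    proof clarsimp
      fix p N n assume "\<forall>n\<ge>N. rel (\<eta> n) p"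
      then have "rel (\<eta> (max n N)) p" by simp
      then show "rel (\<eta> n) p" using le2[of n "max n N"] by simp
    qed
    show "M \<subseteq> LI (\<lambda>n. chr_fut rel {\<eta> n})"
      unfolding LI_def M_def chr_fut_def by blast
  qed
  have LSf: "LS (\<lambda>n. chr_fut rel {\<eta> n}) = M"
  proof
    show "LS (\<lambda>n. chr_fut rel {\<eta> n}) \<subseteq> M"
      unfolding LS_def M_def chr_fut_def
    proof clarsimp
      fix p n assume "\<forall>N. \<exists>n\<ge>N. rel (\<eta> n) p"
      then obtain k where "k \<ge> n" "rel (\<eta> k) p" by blast
      then show "rel (\<eta> n) p" using le2 by blast
    qed
    show "M \<subseteq> LS (\<lambda>n. chr_fut rel {\<eta> n})"
      unfolding LS_def M_def chr_fut_def by blast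
  qed
  have CM: "common_future rel (range \<eta>) \<subseteq> M"
    unfolding common_future_def chr_fut_def M_def using trr by blast
  have FM: "\<And>F. future_set rel F \<Longrightarrow> F \<subseteq> M \<Longrightarrow> F \<subseteq> common_future rel (range \<eta>)"
  proof
    fix F z assume fF: "future_set rel F" and FM: "F \<subseteq> M" and z: "z \<in> F"
    then have "z \<in> chr_fut rel F" unfolding future_set_def by simp
    then obtain w where "w \<in> F" "rel w z" unfolding chr_fut_def by blast
    then show "z \<in> common_future rel (range \<eta>)"
      using FM unfolding common_future_def chr_fut_def M_def by blast
  qed
  have IFfs: "\<And>F. is_IF rel F \<Longrightarrow> future_set rel F" unfolding is_IF_def by blast
  have eqM: "\<And>F. is_IF rel F \<Longrightarrow> (F \<subseteq> M \<longleftrightarrow> F \<subseteq> common_future rel (range \<eta>))"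
    using FM IFfs CM by blast
  have A: "x \<in> hatL rel \<eta> \<longleftrightarrow> chr_past rel {x} = Q"
  proof
    assume "x \<in> hatL rel \<eta>"
    then have "chr_past rel {x} \<subseteq> Q" and
      m: "\<forall>P. is_IP rel P \<and> P \<subseteq> Q \<and> chr_past rel {x} \<subseteq> P \<longrightarrow> P = chr_past rel {x}"
      unfolding hatL_def LIp LSp by auto
    then show "chr_past rel {x} = Q" using QIP by auto
  next
    assume e: "chr_past rel {x} = Q"
    then show "x \<in> hatL rel \<eta>" unfolding hatL_def LIp LSp using PR by auto
  qed
  have B: "x \<in> checkL rel \<eta> \<longleftrightarrow>
               chr_fut rel {x} \<subseteq> common_future rel (range \<eta>) \<and>
               is_IF rel (chr_fut rel {x}) \<and>
               (\<forall>F. is_IF rel F \<and> F \<subseteq> common_future rel (range \<eta>) \<and> chr_fut rel {x} \<subseteq> F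
                    \<longrightarrow> F = chr_fut rel {x})"
  proof -
    have I: "is_IF rel (chr_fut rel {x})" using FR by simp
    have all: "(\<forall>F. is_IF rel F \<and> F \<subseteq> M \<and> chr_fut rel {x} \<subseteq> F \<longrightarrow> F = chr_fut rel {x}) \<longleftrightarrow>
      (\<forall>F. is_IF rel F \<and> F \<subseteq> common_future rel (range \<eta>) \<and> chr_fut rel {x} \<subseteq> F
                    \<longrightarrow> F = chr_fut rel {x})"
    proof (intro iffI allI impI)
      fix F assume h: "\<forall>F. is_IF rel F \<and> F \<subseteq> M \<and> chr_fut rel {x} \<subseteq> F \<longrightarrow> F = chr_fut rel {x}"
        and F: "is_IF rel F \<and> F \<subseteq> common_future rel (range \<eta>) \<and> chr_fut rel {x} \<subseteq> F"
      then have "F \<subseteq> M" using eqM[of F] by simp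
      then show "F = chr_fut rel {x}" using h F by simp
    next
      fix F assume h: "\<forall>F. is_IF rel F \<and> F \<subseteq> common_future rel (range \<eta>) \<and> chr_fut rel {x} \<subseteq> F \<longrightarrow> F = chr_fut rel {x}"
        and F: "is_IF rel F \<and> F \<subseteq> M \<and> chr_fut rel {x} \<subseteq> F"
      then have "F \<subseteq> common_future rel (range \<eta>)" using eqM[of F] F by simp
      then show "F = chr_fut rel {x}" using h F by simp
    qed
    show ?thesis unfolding checkL_def LIf LSf mem_Collect_eq all eqM[OF I] using I by simp
  qed
  show ?thesis using A B Q_def by simp
qed

lemma conv_facts:
  fixes rel :: "'a \<Rightarrow> 'a \<Rightarrow> bool"
  defines "r' \<equiv> (\<lambda>x y. rel y x)"
  shows "chr_past r' = chr_fut rel" "chr_fut r' = chr_past rel"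
    "past_set r' = future_set rel" "future_set r' = past_set rel"
    "is_IP r' = is_IF rel" "is_IF r' = is_IP rel"
    "hatL r' = checkL rel" "checkL r' = hatL rel"
    "common_future r' = common_past rel"
proof -
  show 1: "chr_past r' = chr_fut rel" "chr_fut r' = chr_past rel"
    unfolding r'_def chr_past_def chr_fut_def by (rule ext, simp)+
  show 2: "past_set r' = future_set rel" "future_set r' = past_set rel"
    unfolding past_set_def future_set_def 1 by (rule ext, simp)+
  show 3: "is_IP r' = is_IF rel" "is_IF r' = is_IP rel"
    unfolding is_IP_def is_IF_def 2 by (rule ext, simp)+
  show "hatL r' = checkL rel" "checkL r' = hatL rel"
    unfolding hatL_def checkL_def 1 3 by (rule ext, simp)+
  show "common_future r' = common_past rel"
    unfolding common_future_def common_past_def r'_def chr_fut_def chr_past_def by (rule ext, simp)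
qed

lemma conv_chain: "fut_chain (\<lambda>x y. rel y x) = past_chain rel"
  unfolding fut_chain_def past_chain_def by (rule ext, simp)

theorem mainTheorem1:
  fixes rel :: "'a \<Rightarrow> 'a \<Rightarrow> bool"
  assumes "chronological rel" and "past_regular rel" and "future_regular rel"
  shows "(\<forall>\<eta>. fut_chain rel \<eta> \<longrightarrow> (\<forall>x.
            (x \<in> hatL rel \<eta> \<longleftrightarrow> chr_past rel {x} = chr_past rel (range \<eta>)) \<and>
            (x \<in> checkL rel \<eta> \<longleftrightarrow>
               chr_fut rel {x} \<subseteq> common_future rel (range \<eta>) \<and>
               is_IF rel (chr_fut rel {x}) \<and>
               (\<forall>F. is_IF rel F \<and> F \<subseteq> common_future rel (range \<eta>) \<and> chr_fut rel {x} \<subseteq> F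
                    \<longrightarrow> F = chr_fut rel {x})))) \<and>
         (\<forall>\<eta>. past_chain rel \<eta> \<longrightarrow> (\<forall>x.
            (x \<in> checkL rel \<eta> \<longleftrightarrow> chr_fut rel {x} = chr_fut rel (range \<eta>)) \<and>
            (x \<in> hatL rel \<eta> \<longleftrightarrow>
               chr_past rel {x} \<subseteq> common_past rel (range \<eta>) \<and>
               is_IP rel (chr_past rel {x}) \<and>
               (\<forall>P. is_IP rel P \<and> P \<subseteq> common_past rel (range \<eta>) \<and> chr_past rel {x} \<subseteq> P
                    \<longrightarrow> P = chr_past rel {x}))))"
proof -
  have tr: "\<forall>x y z. rel x y \<longrightarrow> rel y z \<longrightarrow> rel x z" using assms(1) unfolding chronological_def by blast
  have PR: "\<forall>x. is_IP rel (chr_past rel {x})" using assms(2) unfolding past_regular_def by blast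
  have FR: "\<forall>x. is_IF rel (chr_fut rel {x})" using assms(3) unfolding future_regular_def by blast
  define r' where "r' = (\<lambda>x y. rel y x)"
  have tr': "\<forall>x y z. r' x y \<longrightarrow> r' y z \<longrightarrow> r' x z" using tr unfolding r'_def by blast
  note cf = conv_facts[of rel, folded r'_def]
  have PR': "\<forall>x. is_IP r' (chr_past r' {x})" using FR unfolding cf .
  have FR': "\<forall>x. is_IF r' (chr_fut r' {x})" using PR unfolding cf .
  show ?thesis
  proof (rule conjI; intro allI impI)
    fix \<eta> x assume "fut_chain rel \<eta>"
    from fut_case[OF tr PR FR this, of x] show
      "(x \<in> hatL rel \<eta> \<longleftrightarrow> chr_past rel {x} = chr_past rel (range \<eta>)) \<and>
            (x \<in> checkL rel \<eta> \<longleftrightarrow>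
               chr_fut rel {x} \<subseteq> common_future rel (range \<eta>) \<and>
               is_IF rel (chr_fut rel {x}) \<and>
               (\<forall>F. is_IF rel F \<and> F \<subseteq> common_future rel (range \<eta>) \<and> chr_fut rel {x} \<subseteq> F
                    \<longrightarrow> F = chr_fut rel {x}))" .
  next
    fix \<eta> x assume "past_chain rel \<eta>"
    then have "fut_chain r' \<eta>" unfolding r'_def conv_chain .
    from fut_case[OF tr' PR' FR' this, of x] show
      "(x \<in> checkL rel \<eta> \<longleftrightarrow> chr_fut rel {x} = chr_fut rel (range \<eta>)) \<and>
            (x \<in> hatL rel \<eta> \<longleftrightarrow>
               chr_past rel {x} \<subseteq> common_past rel (range \<eta>) \<and>
               is_IP rel (chr_past rel {x}) \<and>
               (\<forall>P. is_IP rel P \<and> P \<subseteq> common_past rel (range \<eta>) \<and> chr_past rel {x} \<subseteq> P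
                    \<longrightarrow> P = chr_past rel {x}))" unfolding cf .
  qed
qed

end
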